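(* Let $F:\mathcal A\to\mathcal B$ be a triangle functor between triangulated categories. Then $F$ satisfies condition (WSE) if and only if $F$ is objective. Here (WSE) means: for each morphism $v:Y\to Z$ in $\mathcal A$ such that $F(v)$ is a splitting epimorphism in $\mathcal B$, there exists an object $Z'$ and a morphism $v':Z'\to Y$ in $\mathcal A$ such that $F(vv')$ is an isomorphism in $\mathcal B$.
   Context: $F$ is objective if every morphism $f$ in $\mathcal A$ with $F(f)=0$ factors through an object $K$ with $F(K)=0$. A triangle functor is a pair $(F,\xi)$ with $F$ additive and $\xi:F[1]\to[1]F$ a natural isomorphism such that $F$ sends distinguished triangles $(X,Y,Z,u,v,w)$ to distinguished triangles $(F(X),F(Y),F(Z),F(u),F(v),\xi_XF(w))$. *)

theory Defs
  imports Main
begin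

text \<open>A (pre)triangulated category presented concretely: a set of objects, hom-sets,
  composition (cmp g f = g after f), identities, addition and zero morphisms on hom-sets,
  a shift functor (on objects and morphisms) and a class of distinguished triangles
  (X, Y, Z, u, v, w) with u : X \<rightarrow> Y, v : Y \<rightarrow> Z, w : Z \<rightarrow> X[1].\<close>

record ('o, 'm) tricat =
  Ob :: "'o set"
  Hom :: "'o \<Rightarrow> 'o \<Rightarrow> 'm set"
  cmp :: "'m \<Rightarrow> 'm \<Rightarrow> 'm"
  idm :: "'o \<Rightarrow> 'm"
  addm :: "'m \<Rightarrow> 'm \<Rightarrow> 'm"
  zerom :: "'o \<Rightarrow> 'o \<Rightarrow> 'm"
  shO :: "'o \<Rightarrow> 'o"
  shM :: "'m \<Rightarrow> 'm"
  Dist :: "('o \<times> 'o \<times> 'o \<times> 'm \<times> 'm \<times> 'm) set"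

definition is_category :: "('o, 'm, 'x) tricat_scheme \<Rightarrow> bool" where
  "is_category C \<longleftrightarrow>
     (\<forall>X Y. Hom C X Y \<noteq> {} \<longrightarrow> X \<in> Ob C \<and> Y \<in> Ob C) \<and>
     (\<forall>X\<in>Ob C. idm C X \<in> Hom C X X) \<and>
     (\<forall>X Y Z f g. f \<in> Hom C X Y \<and> g \<in> Hom C Y Z \<longrightarrow> cmp C g f \<in> Hom C X Z) \<and>
     (\<forall>X Y f. f \<in> Hom C X Y \<longrightarrow> cmp C (idm C Y) f = f \<and> cmp C f (idm C X) = f) \<and>
     (\<forall>W X Y Z f g h. f \<in> Hom C W X \<and> g \<in> Hom C X Y \<and> h \<in> Hom C Y Z \<longrightarrow>
        cmp C h (cmp C g f) = cmp C (cmp C h g) f)"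

definition is_iso :: "('o, 'm, 'x) tricat_scheme \<Rightarrow> 'o \<Rightarrow> 'o \<Rightarrow> 'm \<Rightarrow> bool" where
  "is_iso C X Y f \<longleftrightarrow> f \<in> Hom C X Y \<and>
     (\<exists>g \<in> Hom C Y X. cmp C g f = idm C X \<and> cmp C f g = idm C Y)"

definition split_epi :: "('o, 'm, 'x) tricat_scheme \<Rightarrow> 'o \<Rightarrow> 'o \<Rightarrow> 'm \<Rightarrow> bool" where
  "split_epi C X Y f \<longleftrightarrow> f \<in> Hom C X Y \<and> (\<exists>s \<in> Hom C Y X. cmp C f s = idm C Y)"

definition isomorphic_obj :: "('o, 'm, 'x) tricat_scheme \<Rightarrow> 'o \<Rightarrow> 'o \<Rightarrow> bool" where
  "isomorphic_obj C X Y \<longleftrightarrow> (\<exists>f. is_iso C X Y f)"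

definition is_zero_obj :: "('o, 'm, 'x) tricat_scheme \<Rightarrow> 'o \<Rightarrow> bool" where
  "is_zero_obj C Z \<longleftrightarrow> Z \<in> Ob C \<and>
     (\<forall>X\<in>Ob C. (\<exists>!f. f \<in> Hom C Z X) \<and> (\<exists>!f. f \<in> Hom C X Z))"

definition is_additive :: "('o, 'm, 'x) tricat_scheme \<Rightarrow> bool" where
  "is_additive C \<longleftrightarrow> is_category C \<and>
     (\<forall>X\<in>Ob C. \<forall>Y\<in>Ob C.
        zerom C X Y \<in> Hom C X Y \<and>
        (\<forall>f\<in>Hom C X Y. \<forall>g\<in>Hom C X Y. addm C f g \<in> Hom C X Y \<and> addm C f g = addm C g f) \<and>
        (\<forall>f\<in>Hom C X Y. \<forall>g\<in>Hom C X Y. \<forall>h\<in>Hom C X Y.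
            addm C (addm C f g) h = addm C f (addm C g h)) \<and>
        (\<forall>f\<in>Hom C X Y. addm C f (zerom C X Y) = f) \<and>
        (\<forall>f\<in>Hom C X Y. \<exists>g\<in>Hom C X Y. addm C f g = zerom C X Y)) \<and>
     (\<forall>X Y Z f g h. f \<in> Hom C X Y \<and> g \<in> Hom C Y Z \<and> h \<in> Hom C Y Z \<longrightarrow>
        cmp C (addm C g h) f = addm C (cmp C g f) (cmp C h f)) \<and>
     (\<forall>X Y Z f g h. f \<in> Hom C X Y \<and> g \<in> Hom C X Y \<and> h \<in> Hom C Y Z \<longrightarrow>
        cmp C h (addm C f g) = addm C (cmp C h f) (cmp C h g)) \<and>
     (\<exists>Z. is_zero_obj C Z) \<and>
     (\<forall>X\<in>Ob C. \<forall>Y\<in>Ob C. \<exists>S\<in>Ob C. \<exists>i1\<in>Hom C X S. \<exists>i2\<in>Hom C Y S.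
        \<exists>p1\<in>Hom C S X. \<exists>p2\<in>Hom C S Y.
        cmp C p1 i1 = idm C X \<and> cmp C p2 i2 = idm C Y \<and>
        cmp C p2 i1 = zerom C X Y \<and> cmp C p1 i2 = zerom C Y X \<and>
        addm C (cmp C i1 p1) (cmp C i2 p2) = idm C S)"

definition negm :: "('o, 'm, 'x) tricat_scheme \<Rightarrow> 'o \<Rightarrow> 'o \<Rightarrow> 'm \<Rightarrow> 'm" where
  "negm C X Y f = (THE g. g \<in> Hom C X Y \<and> addm C f g = zerom C X Y)"

definition is_triangle :: "('o, 'm, 'x) tricat_scheme \<Rightarrow> 'o \<times> 'o \<times> 'o \<times> 'm \<times> 'm \<times> 'm \<Rightarrow> bool" where
  "is_triangle C T \<longleftrightarrow> (case T of (X, Y, Z, u, v, w) \<Rightarrow>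
     X \<in> Ob C \<and> Y \<in> Ob C \<and> Z \<in> Ob C \<and>
     u \<in> Hom C X Y \<and> v \<in> Hom C Y Z \<and> w \<in> Hom C Z (shO C X))"

definition tri_morph :: "('o, 'm, 'x) tricat_scheme \<Rightarrow> 'o \<times> 'o \<times> 'o \<times> 'm \<times> 'm \<times> 'm
     \<Rightarrow> 'o \<times> 'o \<times> 'o \<times> 'm \<times> 'm \<times> 'm \<Rightarrow> 'm \<Rightarrow> 'm \<Rightarrow> 'm \<Rightarrow> bool" where
  "tri_morph C T T' a b c \<longleftrightarrow> (case T of (X, Y, Z, u, v, w) \<Rightarrow> case T' of (X', Y', Z', u', v', w') \<Rightarrow>
     a \<in> Hom C X X' \<and> b \<in> Hom C Y Y' \<and> c \<in> Hom C Z Z' \<and>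
     cmp C b u = cmp C u' a \<and> cmp C c v = cmp C v' b \<and> cmp C (shM C a) w = cmp C w' c)"

definition tri_iso :: "('o, 'm, 'x) tricat_scheme \<Rightarrow> 'o \<times> 'o \<times> 'o \<times> 'm \<times> 'm \<times> 'm
     \<Rightarrow> 'o \<times> 'o \<times> 'o \<times> 'm \<times> 'm \<times> 'm \<Rightarrow> bool" where
  "tri_iso C T T' \<longleftrightarrow> (case T of (X, Y, Z, u, v, w) \<Rightarrow> case T' of (X', Y', Z', u', v', w') \<Rightarrow>
     (\<exists>a b c. tri_morph C T T' a b c \<and> is_iso C X X' a \<and> is_iso C Y Y' b \<and> is_iso C Z Z' c))"

definition is_triangulated :: "('o, 'm, 'x) tricat_scheme \<Rightarrow> bool" where
  "is_triangulated C \<longleftrightarrow> is_additive C \<and>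
     \<comment> \<open>shift: additive functor which is an equivalence\<close>
     (\<forall>X\<in>Ob C. shO C X \<in> Ob C \<and> shM C (idm C X) = idm C (shO C X)) \<and>
     (\<forall>X Y Z f g. f \<in> Hom C X Y \<and> g \<in> Hom C Y Z \<longrightarrow>
        shM C (cmp C g f) = cmp C (shM C g) (shM C f)) \<and>
     (\<forall>X\<in>Ob C. \<forall>Y\<in>Ob C. bij_betw (shM C) (Hom C X Y) (Hom C (shO C X) (shO C Y)) \<and>
        (\<forall>f\<in>Hom C X Y. \<forall>g\<in>Hom C X Y. shM C (addm C f g) = addm C (shM C f) (shM C g))) \<and>
     (\<forall>Y\<in>Ob C. \<exists>X\<in>Ob C. isomorphic_obj C (shO C X) Y) \<and>
     \<comment> \<open>TR1\<close>
     (\<forall>T\<in>Dist C. is_triangle C T) \<and>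
     (\<forall>T T'. T \<in> Dist C \<and> is_triangle C T' \<and> tri_iso C T' T \<longrightarrow> T' \<in> Dist C) \<and>
     (\<forall>X\<in>Ob C. \<forall>Z. is_zero_obj C Z \<longrightarrow>
        (X, X, Z, idm C X, zerom C X Z, zerom C Z (shO C X)) \<in> Dist C) \<and>
     (\<forall>X\<in>Ob C. \<forall>Y\<in>Ob C. \<forall>u\<in>Hom C X Y. \<exists>Z v w. (X, Y, Z, u, v, w) \<in> Dist C) \<and>
     \<comment> \<open>TR2 (rotation)\<close>
     (\<forall>X Y Z u v w. is_triangle C (X, Y, Z, u, v, w) \<longrightarrow>
        ((X, Y, Z, u, v, w) \<in> Dist C \<longleftrightarrow>
         (Y, Z, shO C X, v, w, negm C (shO C X) (shO C Y) (shM C u)) \<in> Dist C)) \<and>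
     \<comment> \<open>TR3\<close>
     (\<forall>X Y Z u v w X' Y' Z' u' v' w' a b.
        (X, Y, Z, u, v, w) \<in> Dist C \<and> (X', Y', Z', u', v', w') \<in> Dist C \<and>
        a \<in> Hom C X X' \<and> b \<in> Hom C Y Y' \<and> cmp C b u = cmp C u' a \<longrightarrow>
        (\<exists>c. tri_morph C (X, Y, Z, u, v, w) (X', Y', Z', u', v', w') a b c)) \<and>
     \<comment> \<open>TR4 (octahedral axiom)\<close>
     (\<forall>X Y Z u v Z' j k X' l i Y' m n.
        (X, Y, Z', u, j, k) \<in> Dist C \<and> (Y, Z, X', v, l, i) \<in> Dist C \<and>
        (X, Z, Y', cmp C v u, m, n) \<in> Dist C \<longrightarrow>
        (\<exists>f g. (Z', Y', X', f, g, cmp C (shM C j) i) \<in> Dist C \<and>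
           cmp C f j = cmp C m v \<and> cmp C n f = k \<and>
           cmp C g m = l \<and> cmp C i g = cmp C (shM C u) n))"

definition is_triangle_functor :: "('o, 'm, 'x) tricat_scheme \<Rightarrow> ('p, 'n, 'y) tricat_scheme \<Rightarrow>
     ('o \<Rightarrow> 'p) \<Rightarrow> ('m \<Rightarrow> 'n) \<Rightarrow> ('o \<Rightarrow> 'n) \<Rightarrow> bool" where
  "is_triangle_functor A B FO FM \<xi> \<longleftrightarrow>
     (\<forall>X\<in>Ob A. FO X \<in> Ob B \<and> FM (idm A X) = idm B (FO X)) \<and>
     (\<forall>X Y f. f \<in> Hom A X Y \<longrightarrow> FM f \<in> Hom B (FO X) (FO Y)) \<and>
     (\<forall>X Y Z f g. f \<in> Hom A X Y \<and> g \<in> Hom A Y Z \<longrightarrow> FM (cmp A g f) = cmp B (FM g) (FM f)) \<and>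
     (\<forall>X Y f g. f \<in> Hom A X Y \<and> g \<in> Hom A X Y \<longrightarrow> FM (addm A f g) = addm B (FM f) (FM g)) \<and>
     (\<forall>X\<in>Ob A. is_iso B (FO (shO A X)) (shO B (FO X)) (\<xi> X)) \<and>
     (\<forall>X Y f. f \<in> Hom A X Y \<longrightarrow>
        cmp B (\<xi> Y) (FM (shM A f)) = cmp B (shM B (FM f)) (\<xi> X)) \<and>
     (\<forall>X Y Z u v w. (X, Y, Z, u, v, w) \<in> Dist A \<longrightarrow>
        (FO X, FO Y, FO Z, FM u, FM v, cmp B (\<xi> X) (FM w)) \<in> Dist B)"

definition objective :: "('o, 'm, 'x) tricat_scheme \<Rightarrow> ('p, 'n, 'y) tricat_scheme \<Rightarrow>
     ('o \<Rightarrow> 'p) \<Rightarrow> ('m \<Rightarrow> 'n) \<Rightarrow> bool" where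
  "objective A B FO FM \<longleftrightarrow>
     (\<forall>X Y f. f \<in> Hom A X Y \<and> FM f = zerom B (FO X) (FO Y) \<longrightarrow>
        (\<exists>K\<in>Ob A. is_zero_obj B (FO K) \<and>
           (\<exists>g\<in>Hom A X K. \<exists>h\<in>Hom A K Y. f = cmp A h g)))"

definition WSE :: "('o, 'm, 'x) tricat_scheme \<Rightarrow> ('p, 'n, 'y) tricat_scheme \<Rightarrow>
     ('o \<Rightarrow> 'p) \<Rightarrow> ('m \<Rightarrow> 'n) \<Rightarrow> bool" where
  "WSE A B FO FM \<longleftrightarrow>
     (\<forall>Y Z v. v \<in> Hom A Y Z \<and> split_epi B (FO Y) (FO Z) (FM v) \<longrightarrow>
        (\<exists>Z'\<in>Ob A. \<exists>v'\<in>Hom A Z' Y. is_iso B (FO Z') (FO Z) (FM (cmp A v v'))))"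

end

theory Submission
  imports Defs
begin



locale tri =
  fixes C :: "('o, 'm, 'x) tricat_scheme"
  assumes T: "is_triangulated C"
begin

lemma TT1: "is_additive C"
  using T unfolding is_triangulated_def by (elim conjE) assumption

lemma TT2: "(\<forall>X\<in>Ob C. shO C X \<in> Ob C \<and> shM C (idm C X) = idm C (shO C X))"
  using T unfolding is_triangulated_def by (elim conjE) assumption

lemma TT3: "(\<forall>X Y Z f g. f \<in> Hom C X Y \<and> g \<in> Hom C Y Z \<longrightarrow>
        shM C (cmp C g f) = cmp C (shM C g) (shM C f))"
  using T unfolding is_triangulated_def by (elim conjE) assumption

lemma TT4: "(\<forall>X\<in>Ob C. \<forall>Y\<in>Ob C. bij_betw (shM C) (Hom C X Y) (Hom C (shO C X) (shO C Y)) \<and>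
        (\<forall>f\<in>Hom C X Y. \<forall>g\<in>Hom C X Y. shM C (addm C f g) = addm C (shM C f) (shM C g)))"
  using T unfolding is_triangulated_def by (elim conjE) assumption

lemma TT5: "(\<forall>Y\<in>Ob C. \<exists>X\<in>Ob C. isomorphic_obj C (shO C X) Y)"
  using T unfolding is_triangulated_def by (elim conjE) assumption

lemma TT6: "(\<forall>T\<in>Dist C. is_triangle C T)"
  using T unfolding is_triangulated_def by (elim conjE) assumption

lemma TT7: "(\<forall>T T'. T \<in> Dist C \<and> is_triangle C T' \<and> tri_iso C T' T \<longrightarrow> T' \<in> Dist C)"
  using T unfolding is_triangulated_def by (elim conjE) assumption

lemma TT8: "(\<forall>X\<in>Ob C. \<forall>Z. is_zero_obj C Z \<longrightarrow>
        (X, X, Z, idm C X, zerom C X Z, zerom C Z (shO C X)) \<in> Dist C)"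
  using T unfolding is_triangulated_def by (elim conjE) assumption

lemma TT9: "(\<forall>X\<in>Ob C. \<forall>Y\<in>Ob C. \<forall>u\<in>Hom C X Y. \<exists>Z v w. (X, Y, Z, u, v, w) \<in> Dist C)"
  using T unfolding is_triangulated_def by (elim conjE) assumption

lemma TT10: "(\<forall>X Y Z u v w. is_triangle C (X, Y, Z, u, v, w) \<longrightarrow>
        ((X, Y, Z, u, v, w) \<in> Dist C \<longleftrightarrow>
         (Y, Z, shO C X, v, w, negm C (shO C X) (shO C Y) (shM C u)) \<in> Dist C))"
  using T unfolding is_triangulated_def by (elim conjE) assumption

lemma TT11: "(\<forall>X Y Z u v w X' Y' Z' u' v' w' a b.
        (X, Y, Z, u, v, w) \<in> Dist C \<and> (X', Y', Z', u', v', w') \<in> Dist C \<and>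
        a \<in> Hom C X X' \<and> b \<in> Hom C Y Y' \<and> cmp C b u = cmp C u' a \<longrightarrow>
        (\<exists>c. tri_morph C (X, Y, Z, u, v, w) (X', Y', Z', u', v', w') a b c))"
  using T unfolding is_triangulated_def by (elim conjE) assumption

lemmas TTs = TT1 TT2 TT3 TT4 TT5 TT6 TT7 TT8 TT9 TT10 TT11

lemma addv: "is_additive C" by (rule TTs(1))
lemma AA1: "is_category C"
  using addv unfolding is_additive_def by (elim conjE) assumption

lemma AA2: "(\<forall>X\<in>Ob C. \<forall>Y\<in>Ob C.
        zerom C X Y \<in> Hom C X Y \<and>
        (\<forall>f\<in>Hom C X Y. \<forall>g\<in>Hom C X Y. addm C f g \<in> Hom C X Y \<and> addm C f g = addm C g f) \<and>
        (\<forall>f\<in>Hom C X Y. \<forall>g\<in>Hom C X Y. \<forall>h\<in>Hom C X Y.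
            addm C (addm C f g) h = addm C f (addm C g h)) \<and>
        (\<forall>f\<in>Hom C X Y. addm C f (zerom C X Y) = f) \<and>
        (\<forall>f\<in>Hom C X Y. \<exists>g\<in>Hom C X Y. addm C f g = zerom C X Y))"
  using addv unfolding is_additive_def by (elim conjE) assumption

lemma AA3: "(\<forall>X Y Z f g h. f \<in> Hom C X Y \<and> g \<in> Hom C Y Z \<and> h \<in> Hom C Y Z \<longrightarrow>
        cmp C (addm C g h) f = addm C (cmp C g f) (cmp C h f))"
  using addv unfolding is_additive_def by (elim conjE) assumption

lemma AA4: "(\<forall>X Y Z f g h. f \<in> Hom C X Y \<and> g \<in> Hom C X Y \<and> h \<in> Hom C Y Z \<longrightarrow>
        cmp C h (addm C f g) = addm C (cmp C h f) (cmp C h g))"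
  using addv unfolding is_additive_def by (elim conjE) assumption

lemma AA5: "(\<exists>Z. is_zero_obj C Z)"
  using addv unfolding is_additive_def by (elim conjE) assumption

lemma AA6: "(\<forall>X\<in>Ob C. \<forall>Y\<in>Ob C. \<exists>S\<in>Ob C. \<exists>i1\<in>Hom C X S. \<exists>i2\<in>Hom C Y S.
        \<exists>p1\<in>Hom C S X. \<exists>p2\<in>Hom C S Y.
        cmp C p1 i1 = idm C X \<and> cmp C p2 i2 = idm C Y \<and>
        cmp C p2 i1 = zerom C X Y \<and> cmp C p1 i2 = zerom C Y X \<and>
        addm C (cmp C i1 p1) (cmp C i2 p2) = idm C S)"
  using addv unfolding is_additive_def by (elim conjE) assumption

lemmas AAs = AA1 AA2 AA3 AA4 AA5 AA6

lemma cat: "is_category C" by (rule AAs(1))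

lemma hom_ob: "f \<in> Hom C X Y \<Longrightarrow> X \<in> Ob C \<and> Y \<in> Ob C"
  using cat unfolding is_category_def by blast
lemma id_hom: "X \<in> Ob C \<Longrightarrow> idm C X \<in> Hom C X X"
  using cat unfolding is_category_def by blast
lemma comp_hom: "f \<in> Hom C X Y \<Longrightarrow> g \<in> Hom C Y Z \<Longrightarrow> cmp C g f \<in> Hom C X Z"
  using cat unfolding is_category_def by blast
lemma id_l: "f \<in> Hom C X Y \<Longrightarrow> cmp C (idm C Y) f = f"
  using cat unfolding is_category_def by blast
lemma id_r: "f \<in> Hom C X Y \<Longrightarrow> cmp C f (idm C X) = f"
  using cat unfolding is_category_def by blast
lemma assoc: "f \<in> Hom C W X \<Longrightarrow> g \<in> Hom C X Y \<Longrightarrow> h \<in> Hom C Y Z \<Longrightarrow>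
  cmp C h (cmp C g f) = cmp C (cmp C h g) f"
  using cat unfolding is_category_def by blast

lemma zero_hom: "X \<in> Ob C \<Longrightarrow> Y \<in> Ob C \<Longrightarrow> zerom C X Y \<in> Hom C X Y"
  using AAs(2) by blast
lemma add_hom: "f \<in> Hom C X Y \<Longrightarrow> g \<in> Hom C X Y \<Longrightarrow> addm C f g \<in> Hom C X Y"
  using AAs(2) hom_ob[of f X Y] by blast
lemma add_comm: "f \<in> Hom C X Y \<Longrightarrow> g \<in> Hom C X Y \<Longrightarrow> addm C f g = addm C g f"
  using AAs(2) hom_ob[of f X Y] by blast
lemma add_assoc: "f \<in> Hom C X Y \<Longrightarrow> g \<in> Hom C X Y \<Longrightarrow> h \<in> Hom C X Y \<Longrightarrow>
   addm C (addm C f g) h = addm C f (addm C g h)"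
  using AAs(2) hom_ob[of f X Y] by blast
lemma add_zero: "f \<in> Hom C X Y \<Longrightarrow> addm C f (zerom C X Y) = f"
  using AAs(2) hom_ob[of f X Y] by blast
lemma inv_ex: "f \<in> Hom C X Y \<Longrightarrow> \<exists>g\<in>Hom C X Y. addm C f g = zerom C X Y"
  using AAs(2) hom_ob[of f X Y] by blast
lemma distl: "f \<in> Hom C X Y \<Longrightarrow> g \<in> Hom C Y Z \<Longrightarrow> h \<in> Hom C Y Z \<Longrightarrow>
   cmp C (addm C g h) f = addm C (cmp C g f) (cmp C h f)"
  using AAs(3) by blast
lemma distr: "f \<in> Hom C X Y \<Longrightarrow> g \<in> Hom C X Y \<Longrightarrow> h \<in> Hom C Y Z \<Longrightarrow>
   cmp C h (addm C f g) = addm C (cmp C h f) (cmp C h g)"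
  using AAs(4) by blast
lemma zero_ex: "\<exists>E. is_zero_obj C E"
  using AAs(5) by blast

lemma shO_ob: "X \<in> Ob C \<Longrightarrow> shO C X \<in> Ob C"
  using TTs(2) by blast
lemma shM_id: "X \<in> Ob C \<Longrightarrow> shM C (idm C X) = idm C (shO C X)"
  using TTs(2) by blast
lemma shM_comp: "f \<in> Hom C X Y \<Longrightarrow> g \<in> Hom C Y Z \<Longrightarrow>
   shM C (cmp C g f) = cmp C (shM C g) (shM C f)"
  using TTs(3) by blast
lemma shM_bij: "X \<in> Ob C \<Longrightarrow> Y \<in> Ob C \<Longrightarrow> bij_betw (shM C) (Hom C X Y) (Hom C (shO C X) (shO C Y))"
  using TTs(4) by blast
lemma shM_add: "f \<in> Hom C X Y \<Longrightarrow> g \<in> Hom C X Y \<Longrightarrow> shM C (addm C f g) = addm C (shM C f) (shM C g)"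
  using TTs(4) hom_ob[of f X Y] by blast
lemma ess: "Y \<in> Ob C \<Longrightarrow> \<exists>X\<in>Ob C. \<exists>f. is_iso C (shO C X) Y f"
  using TTs(5) unfolding isomorphic_obj_def by blast
lemma dist_tri: "(X,Y,Z,u,v,w) \<in> Dist C \<Longrightarrow> X \<in> Ob C \<and> Y \<in> Ob C \<and> Z \<in> Ob C \<and>
   u \<in> Hom C X Y \<and> v \<in> Hom C Y Z \<and> w \<in> Hom C Z (shO C X)"
  using TTs(6) unfolding is_triangle_def by fastforce
lemma iso_closed: "T \<in> Dist C \<Longrightarrow> is_triangle C T' \<Longrightarrow> tri_iso C T' T \<Longrightarrow> T' \<in> Dist C"
  using TTs(7) by blast
lemma triv: "is_zero_obj C E \<Longrightarrow> W \<in> Ob C \<Longrightarrow>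
   (W, W, E, idm C W, zerom C W E, zerom C E (shO C W)) \<in> Dist C"
  using TTs(8) by blast
lemma tr1ex: "X \<in> Ob C \<Longrightarrow> Y \<in> Ob C \<Longrightarrow> u \<in> Hom C X Y \<Longrightarrow> \<exists>Z v w. (X, Y, Z, u, v, w) \<in> Dist C"
  using TTs(9) by blast
lemma tr2: "is_triangle C (X, Y, Z, u, v, w) \<Longrightarrow>
        ((X, Y, Z, u, v, w) \<in> Dist C \<longleftrightarrow>
         (Y, Z, shO C X, v, w, negm C (shO C X) (shO C Y) (shM C u)) \<in> Dist C)"
  using TTs(10) by blast
lemma tr3: "(X, Y, Z, u, v, w) \<in> Dist C \<Longrightarrow> (X', Y', Z', u', v', w') \<in> Dist C \<Longrightarrow>
        a \<in> Hom C X X' \<Longrightarrow> b \<in> Hom C Y Y' \<Longrightarrow> cmp C b u = cmp C u' a \<Longrightarrow>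
        (\<exists>c. tri_morph C (X, Y, Z, u, v, w) (X', Y', Z', u', v', w') a b c)"
  using TTs(11) by blast

end



context tri
begin

lemma add_cancel:
  assumes f: "f \<in> Hom C X Y" and g: "g \<in> Hom C X Y" and e: "addm C f g = f"
  shows "g = zerom C X Y"
proof -
  obtain n where n: "n \<in> Hom C X Y" "addm C f n = zerom C X Y" using inv_ex f by blast
  have "g = addm C g (zerom C X Y)" using add_zero g by simp
  also have "\<dots> = addm C g (addm C f n)" using n by simp
  also have "\<dots> = addm C (addm C g f) n" using add_assoc[OF g f n(1)] by simp
  also have "\<dots> = addm C (addm C f g) n" using add_comm[OF f g] by simp
  also have "\<dots> = addm C f n" using e by simp
  finally show ?thesis using n by simp
qed

lemma comp_zero_r:
  assumes h: "h \<in> Hom C Y Z" and X: "X \<in> Ob C"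
  shows "cmp C h (zerom C X Y) = zerom C X Z"
proof -
  have Y: "Y \<in> Ob C" using hom_ob h by blast
  have z: "zerom C X Y \<in> Hom C X Y" using zero_hom X Y by blast
  have hz: "cmp C h (zerom C X Y) \<in> Hom C X Z" using comp_hom z h by blast
  have "cmp C h (zerom C X Y) = cmp C h (addm C (zerom C X Y) (zerom C X Y))"
    using add_zero[OF z] by simp
  also have "\<dots> = addm C (cmp C h (zerom C X Y)) (cmp C h (zerom C X Y))"
    using distr[OF z z h] .
  finally show ?thesis using add_cancel[OF hz hz] by simp
qed

lemma comp_zero_l:
  assumes f: "f \<in> Hom C X Y" and Z: "Z \<in> Ob C"
  shows "cmp C (zerom C Y Z) f = zerom C X Z"
proof -
  have Y: "Y \<in> Ob C" using hom_ob f by blast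
  have z: "zerom C Y Z \<in> Hom C Y Z" using zero_hom Z Y by blast
  have hz: "cmp C (zerom C Y Z) f \<in> Hom C X Z" using comp_hom z f by blast
  have "cmp C (zerom C Y Z) f = cmp C (addm C (zerom C Y Z) (zerom C Y Z)) f"
    using add_zero[OF z] by simp
  also have "\<dots> = addm C (cmp C (zerom C Y Z) f) (cmp C (zerom C Y Z) f)"
    using distl[OF f z z] .
  finally show ?thesis using add_cancel[OF hz hz] by simp
qed

lemma zero_add:
  assumes g: "g \<in> Hom C X Y" shows "addm C (zerom C X Y) g = g"
proof -
  have z: "zerom C X Y \<in> Hom C X Y" using hom_ob[OF g] zero_hom by blast
  show ?thesis using add_comm[OF z g] add_zero[OF g] by simp
qed

lemma inv_uniq:
  assumes f: "f \<in> Hom C X Y" and g: "g \<in> Hom C X Y" and g': "g' \<in> Hom C X Y"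
    and e: "addm C f g = zerom C X Y" and e': "addm C f g' = zerom C X Y"
  shows "g = g'"
proof -
  have "g = addm C g (zerom C X Y)" using add_zero g by simp
  also have "\<dots> = addm C g (addm C f g')" using e' by simp
  also have "\<dots> = addm C (addm C g f) g'" using add_assoc[OF g f g'] by simp
  also have "\<dots> = addm C (addm C f g) g'" using add_comm[OF f g] by simp
  also have "\<dots> = g'" using e zero_add[OF g'] by simp
  finally show ?thesis .
qed

lemma neg:
  assumes f: "f \<in> Hom C X Y"
  shows "negm C X Y f \<in> Hom C X Y \<and> addm C f (negm C X Y f) = zerom C X Y"
proof -
  obtain g0 where g0: "g0 \<in> Hom C X Y" "addm C f g0 = zerom C X Y" using inv_ex[OF f] by blast
  have "\<exists>!g. g \<in> Hom C X Y \<and> addm C f g = zerom C X Y"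
  proof (rule ex1I[of _ g0])
    show "g0 \<in> Hom C X Y \<and> addm C f g0 = zerom C X Y" using g0 by blast
    fix g assume "g \<in> Hom C X Y \<and> addm C f g = zerom C X Y"
    then show "g = g0" using inv_uniq[OF f _ g0(1) _ g0(2)] by blast
  qed
  then show ?thesis unfolding negm_def by (rule theI')
qed

lemma neg_hom: "f \<in> Hom C X Y \<Longrightarrow> negm C X Y f \<in> Hom C X Y" using neg by blast
lemma neg_add: "f \<in> Hom C X Y \<Longrightarrow> addm C f (negm C X Y f) = zerom C X Y" using neg by blast

lemma neg_unique:
  assumes f: "f \<in> Hom C X Y" and g: "g \<in> Hom C X Y" and e: "addm C f g = zerom C X Y"
  shows "negm C X Y f = g"
  using inv_uniq[OF f neg_hom[OF f] g neg_add[OF f] e] .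

lemma neg_neg:
  assumes f: "f \<in> Hom C X Y" shows "negm C X Y (negm C X Y f) = f"
proof -
  have "addm C (negm C X Y f) f = zerom C X Y"
    using add_comm[OF neg_hom[OF f] f] neg_add[OF f] by simp
  then show ?thesis using neg_unique[OF neg_hom[OF f] f] by simp
qed

lemma neg_zero:
  assumes "X \<in> Ob C" "Y \<in> Ob C" shows "negm C X Y (zerom C X Y) = zerom C X Y"
  using neg_unique[OF zero_hom[OF assms] zero_hom[OF assms] add_zero[OF zero_hom[OF assms]]] .

lemma neg_inj:
  assumes "f \<in> Hom C X Y" "g \<in> Hom C X Y" "negm C X Y f = negm C X Y g" shows "f = g"
proof -
  have "f = negm C X Y (negm C X Y f)" using neg_neg[OF assms(1)] by (rule sym)
  also have "\<dots> = negm C X Y (negm C X Y g)" using assms(3) by (rule arg_cong)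
  also have "\<dots> = g" using neg_neg[OF assms(2)] .
  finally show ?thesis .
qed

lemma neg_eq_zero:
  assumes f: "f \<in> Hom C X Y" and e: "negm C X Y f = zerom C X Y" shows "f = zerom C X Y"
proof -
  have "f = negm C X Y (negm C X Y f)" using neg_neg[OF f] by simp
  also have "\<dots> = zerom C X Y" using e neg_zero hom_ob[OF f] by metis
  finally show ?thesis .
qed

lemma eq_of_add_neg:
  assumes f: "f \<in> Hom C X Y" and g: "g \<in> Hom C X Y" and e: "addm C f (negm C X Y g) = zerom C X Y"
  shows "f = g"
proof -
  have "negm C X Y f = negm C X Y g" using neg_unique[OF f neg_hom[OF g] e] .
  then show ?thesis using neg_inj f g by blast
qed

lemma comp_neg_l:
  assumes f: "f \<in> Hom C X Y" and g: "g \<in> Hom C Y Z"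
  shows "cmp C (negm C Y Z g) f = negm C X Z (cmp C g f)"
proof -
  have gf: "cmp C g f \<in> Hom C X Z" using comp_hom f g by blast
  have ng: "cmp C (negm C Y Z g) f \<in> Hom C X Z" using comp_hom f neg_hom[OF g] by blast
  have "addm C (cmp C g f) (cmp C (negm C Y Z g) f) = cmp C (addm C g (negm C Y Z g)) f"
    using distl[OF f g neg_hom[OF g]] by simp
  also have "\<dots> = zerom C X Z" using neg_add[OF g] comp_zero_l[OF f] hom_ob[OF g] by simp
  finally show ?thesis using neg_unique[OF gf ng] by simp
qed

lemma comp_neg_r:
  assumes f: "f \<in> Hom C X Y" and h: "h \<in> Hom C Y Z"
  shows "cmp C h (negm C X Y f) = negm C X Z (cmp C h f)"
proof -
  have hf: "cmp C h f \<in> Hom C X Z" using comp_hom f h by blast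
  have nh: "cmp C h (negm C X Y f) \<in> Hom C X Z" using comp_hom h neg_hom[OF f] by blast
  have "addm C (cmp C h f) (cmp C h (negm C X Y f)) = cmp C h (addm C f (negm C X Y f))"
    using distr[OF f neg_hom[OF f] h] by simp
  also have "\<dots> = zerom C X Z" using neg_add[OF f] comp_zero_r[OF h] hom_ob[OF f] by simp
  finally show ?thesis using neg_unique[OF hf nh] by simp
qed

lemma shM_hom: "f \<in> Hom C X Y \<Longrightarrow> shM C f \<in> Hom C (shO C X) (shO C Y)"
proof -
  assume f: "f \<in> Hom C X Y"
  have X: "X \<in> Ob C" and Y: "Y \<in> Ob C" using hom_ob f by auto
  show ?thesis using bij_betwE[OF shM_bij[OF X Y]] f by blast
qed

lemma shM_inj: "f \<in> Hom C X Y \<Longrightarrow> g \<in> Hom C X Y \<Longrightarrow> shM C f = shM C g \<Longrightarrow> f = g"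
proof -
  assume f: "f \<in> Hom C X Y" and g: "g \<in> Hom C X Y" and e: "shM C f = shM C g"
  have X: "X \<in> Ob C" and Y: "Y \<in> Ob C" using hom_ob f by auto
  show ?thesis using inj_onD[OF bij_betw_imp_inj_on[OF shM_bij[OF X Y]] e f g] .
qed

lemma shM_surj: "X \<in> Ob C \<Longrightarrow> Y \<in> Ob C \<Longrightarrow> g \<in> Hom C (shO C X) (shO C Y) \<Longrightarrow>
   \<exists>f\<in>Hom C X Y. shM C f = g"
proof -
  assume X: "X \<in> Ob C" and Y: "Y \<in> Ob C" and g: "g \<in> Hom C (shO C X) (shO C Y)"
  have "shM C ` Hom C X Y = Hom C (shO C X) (shO C Y)" using shM_bij[OF X Y] unfolding bij_betw_def by blast
  then show ?thesis using g by (metis imageE)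
qed

lemma shM_zero:
  assumes X: "X \<in> Ob C" and Y: "Y \<in> Ob C"
  shows "shM C (zerom C X Y) = zerom C (shO C X) (shO C Y)"
proof -
  have z: "zerom C X Y \<in> Hom C X Y" using zero_hom X Y by blast
  have s: "shM C (zerom C X Y) \<in> Hom C (shO C X) (shO C Y)" using shM_hom z by blast
  have "shM C (zerom C X Y) = shM C (addm C (zerom C X Y) (zerom C X Y))" using add_zero[OF z] by simp
  also have "\<dots> = addm C (shM C (zerom C X Y)) (shM C (zerom C X Y))" using shM_add[OF z z] .
  finally show ?thesis using add_cancel[OF s s] by simp
qed

lemma zobj_ob: "is_zero_obj C E \<Longrightarrow> E \<in> Ob C" unfolding is_zero_obj_def by blast

lemma zobj_from:
  assumes E: "is_zero_obj C E" and f: "f \<in> Hom C E X" shows "f = zerom C E X"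
proof -
  have X: "X \<in> Ob C" using hom_ob f by blast
  have "zerom C E X \<in> Hom C E X" using zero_hom zobj_ob[OF E] X by blast
  moreover have "\<exists>!f. f \<in> Hom C E X" using E X unfolding is_zero_obj_def by blast
  ultimately show ?thesis using f by blast
qed

lemma zobj_to:
  assumes E: "is_zero_obj C E" and f: "f \<in> Hom C X E" shows "f = zerom C X E"
proof -
  have X: "X \<in> Ob C" using hom_ob f by blast
  have "zerom C X E \<in> Hom C X E" using zero_hom zobj_ob[OF E] X by blast
  moreover have "\<exists>!f. f \<in> Hom C X E" using E X unfolding is_zero_obj_def by blast
  ultimately show ?thesis using f by blast
qed

lemma zobj_intro:
  assumes E: "E \<in> Ob C" and i: "idm C E = zerom C E E" shows "is_zero_obj C E"
  unfolding is_zero_obj_def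
proof (intro conjI ballI E)
  fix X assume X: "X \<in> Ob C"
  show "\<exists>!f. f \<in> Hom C E X"
  proof (rule ex1I[of _ "zerom C E X"])
    show "zerom C E X \<in> Hom C E X" using zero_hom E X by blast
    fix f assume f: "f \<in> Hom C E X"
    have "f = cmp C f (idm C E)" using id_r f by simp
    also have "\<dots> = zerom C E X" using i comp_zero_r[OF f E] by simp
    finally show "f = zerom C E X" .
  qed
  show "\<exists>!f. f \<in> Hom C X E"
  proof (rule ex1I[of _ "zerom C X E"])
    show "zerom C X E \<in> Hom C X E" using zero_hom E X by blast
    fix f assume f: "f \<in> Hom C X E"
    have "f = cmp C (idm C E) f" using id_l f by simp
    also have "\<dots> = zerom C X E" using i comp_zero_l[OF f E] by simp
    finally show "f = zerom C X E" .
  qed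
qed

lemma zobj_id: "is_zero_obj C E \<Longrightarrow> idm C E = zerom C E E"
  using zobj_from id_hom[OF zobj_ob] by blast

lemma zobj_iso1:
  assumes E: "is_zero_obj C E" and f: "is_iso C E W f" shows "is_zero_obj C W"
proof -
  obtain g where g: "g \<in> Hom C W E" "cmp C f g = idm C W" and fh: "f \<in> Hom C E W"
    using f unfolding is_iso_def by blast
  have W: "W \<in> Ob C" using hom_ob fh by blast
  have "idm C W = cmp C f (zerom C W E)" using g zobj_to[OF E g(1)] by simp
  also have "\<dots> = zerom C W W" using comp_zero_r[OF fh W] .
  finally show ?thesis using zobj_intro W by blast
qed

lemma zobj_iso2:
  assumes E: "is_zero_obj C E" and f: "is_iso C W E f" shows "is_zero_obj C W"
proof -
  obtain g where g: "g \<in> Hom C E W" "cmp C g f = idm C W" and fh: "f \<in> Hom C W E"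
    using f unfolding is_iso_def by blast
  have W: "W \<in> Ob C" using hom_ob fh by blast
  have "idm C W = cmp C g (zerom C W E)" using g zobj_to[OF E fh] by simp
  also have "\<dots> = zerom C W W" using comp_zero_r[OF g(1) W] .
  finally show ?thesis using zobj_intro W by blast
qed

lemma shift_zobj:
  assumes E: "is_zero_obj C E" shows "is_zero_obj C (shO C E)"
proof -
  have Eo: "E \<in> Ob C" using zobj_ob E by blast
  have "idm C (shO C E) = shM C (idm C E)" using shM_id Eo by simp
  also have "\<dots> = zerom C (shO C E) (shO C E)" using zobj_id[OF E] shM_zero Eo by simp
  finally show ?thesis using zobj_intro shO_ob Eo by blast
qed

lemma shift_zobj_refl:
  assumes X: "X \<in> Ob C" and E: "is_zero_obj C (shO C X)" shows "is_zero_obj C X"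
proof -
  have "shM C (idm C X) = shM C (zerom C X X)"
    using shM_id[OF X] zobj_id[OF E] shM_zero[OF X X] by simp
  then have "idm C X = zerom C X X" using shM_inj[OF id_hom[OF X] zero_hom[OF X X]] by blast
  then show ?thesis using zobj_intro X by blast
qed

lemma id_iso: "X \<in> Ob C \<Longrightarrow> is_iso C X X (idm C X)"
  unfolding is_iso_def using id_hom id_l by blast

end



context tri
begin

lemma rot: "(X,Y,Z,u,v,w) \<in> Dist C \<Longrightarrow>
   (Y, Z, shO C X, v, w, negm C (shO C X) (shO C Y) (shM C u)) \<in> Dist C"
  using tr2 TTs(6) by blast

lemma comp_dist:
  assumes D: "(X,Y,Z,u,v,w) \<in> Dist C" shows "cmp C v u = zerom C X Z"
proof -
  have h: "X \<in> Ob C" "Y \<in> Ob C" "Z \<in> Ob C" "u \<in> Hom C X Y" "v \<in> Hom C Y Z" "w \<in> Hom C Z (shO C X)"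
    using dist_tri[OF D] by auto
  obtain E where E: "is_zero_obj C E" using zero_ex by blast
  have T1: "(X,X,E,idm C X, zerom C X E, zerom C E (shO C X)) \<in> Dist C" using triv E h(1) by blast
  obtain c where "tri_morph C (X,X,E,idm C X, zerom C X E, zerom C E (shO C X)) (X,Y,Z,u,v,w) (idm C X) u c"
    using tr3[OF T1 D id_hom[OF h(1)] h(4)] by blast
  then have c: "c \<in> Hom C E Z" "cmp C c (zerom C X E) = cmp C v u" unfolding tri_morph_def by auto
  then show ?thesis using comp_zero_r[OF c(1) h(1)] by simp
qed

lemma exact_cov:
  assumes D: "(X,Y,Z,u,v,w) \<in> Dist C" and g: "g \<in> Hom C W Y" and gz: "cmp C v g = zerom C W Z"
  shows "\<exists>h\<in>Hom C W X. g = cmp C u h"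
proof -
  have h: "X \<in> Ob C" "Y \<in> Ob C" "Z \<in> Ob C" "u \<in> Hom C X Y" "v \<in> Hom C Y Z" "w \<in> Hom C Z (shO C X)"
    using dist_tri[OF D] by auto
  have W: "W \<in> Ob C" using hom_ob g by blast
  obtain E where E: "is_zero_obj C E" using zero_ex by blast
  have Eo: "E \<in> Ob C" using zobj_ob E by blast
  have S: "(W, E, shO C W, zerom C W E, zerom C E (shO C W),
      negm C (shO C W) (shO C W) (shM C (idm C W))) \<in> Dist C"
    using rot[OF triv[OF E W]] .
  have R: "(Y, Z, shO C X, v, w, negm C (shO C X) (shO C Y) (shM C u)) \<in> Dist C" using rot[OF D] .
  have b: "zerom C E Z \<in> Hom C E Z" using zero_hom Eo h(3) by blast
  have cm: "cmp C (zerom C E Z) (zerom C W E) = cmp C v g"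
    using comp_zero_l[OF zero_hom[OF W Eo] h(3)] gz by simp
  obtain c where "tri_morph C (W, E, shO C W, zerom C W E, zerom C E (shO C W),
      negm C (shO C W) (shO C W) (shM C (idm C W)))
      (Y, Z, shO C X, v, w, negm C (shO C X) (shO C Y) (shM C u)) g (zerom C E Z) c"
    using tr3[OF S R g b cm] by blast
  then have c: "c \<in> Hom C (shO C W) (shO C X)" and
    eq: "cmp C (shM C g) (negm C (shO C W) (shO C W) (shM C (idm C W)))
       = cmp C (negm C (shO C X) (shO C Y) (shM C u)) c"
    unfolding tri_morph_def by auto
  have sg: "shM C g \<in> Hom C (shO C W) (shO C Y)" using shM_hom g by blast
  have su: "shM C u \<in> Hom C (shO C X) (shO C Y)" using shM_hom h(4) by blast
  have iW: "idm C (shO C W) \<in> Hom C (shO C W) (shO C W)" using id_hom shO_ob W by blast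
  have "cmp C (shM C g) (negm C (shO C W) (shO C W) (shM C (idm C W)))
     = negm C (shO C W) (shO C Y) (shM C g)"
    using shM_id[OF W] comp_neg_r[OF iW sg] id_r[OF sg] by simp
  moreover have "cmp C (negm C (shO C X) (shO C Y) (shM C u)) c = negm C (shO C W) (shO C Y) (cmp C (shM C u) c)"
    using comp_neg_l[OF c su] .
  ultimately have "shM C g = cmp C (shM C u) c"
    using eq neg_inj[OF sg comp_hom[OF c su]] by simp
  moreover obtain h0 where h0: "h0 \<in> Hom C W X" "shM C h0 = c" using shM_surj[OF W h(1) c] by blast
  ultimately have "shM C g = shM C (cmp C u h0)" using shM_comp[OF h0(1) h(4)] by simp
  then have "g = cmp C u h0" using shM_inj[OF g comp_hom[OF h0(1) h(4)]] by blast
  then show ?thesis using h0 by blast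
qed

lemma exact_contra:
  assumes D: "(X,Y,Z,u,v,w) \<in> Dist C" and g: "g \<in> Hom C Y W" and gz: "cmp C g u = zerom C X W"
  shows "\<exists>h\<in>Hom C Z W. g = cmp C h v"
proof -
  have h: "X \<in> Ob C" "Y \<in> Ob C" "Z \<in> Ob C" "u \<in> Hom C X Y" "v \<in> Hom C Y Z" "w \<in> Hom C Z (shO C X)"
    using dist_tri[OF D] by auto
  have W: "W \<in> Ob C" using hom_ob g by blast
  obtain E where E: "is_zero_obj C E" using zero_ex by blast
  have Eo: "E \<in> Ob C" using zobj_ob E by blast
  have E1: "is_zero_obj C (shO C E)" using shift_zobj E by blast
  have tT: "is_triangle C (E, W, W, zerom C E W, idm C W, zerom C W (shO C E))"
    unfolding is_triangle_def using Eo W zero_hom id_hom shO_ob by auto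
  have nz: "negm C (shO C E) (shO C W) (shM C (zerom C E W)) = zerom C (shO C E) (shO C W)"
    using zobj_from[OF E1 neg_hom[OF shM_hom[OF zero_hom[OF Eo W]]]] .
  have "(W, W, shO C E, idm C W, zerom C W (shO C E), zerom C (shO C E) (shO C W)) \<in> Dist C"
    using triv[OF E1 W] .
  then have T': "(E, W, W, zerom C E W, idm C W, zerom C W (shO C E)) \<in> Dist C"
    using tr2[OF tT] nz by simp
  have a: "zerom C X E \<in> Hom C X E" using zero_hom h(1) Eo by blast
  have cm: "cmp C g u = cmp C (zerom C E W) (zerom C X E)"
    using comp_zero_l[OF a W] gz by simp
  obtain c where "tri_morph C (X,Y,Z,u,v,w) (E, W, W, zerom C E W, idm C W, zerom C W (shO C E))
      (zerom C X E) g c"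
    using tr3[OF D T' a g cm] by blast
  then have "c \<in> Hom C Z W" "cmp C c v = cmp C (idm C W) g" unfolding tri_morph_def by auto
  then show ?thesis using id_l[OF g] by auto
qed

lemma back_rot:
  assumes D: "(Z,K,M,g,p,q) \<in> Dist C"
  shows "\<exists>Z' v r. Z' \<in> Ob C \<and> (Z',Z,K,v,g,r) \<in> Dist C"
proof -
  have h: "Z \<in> Ob C" "K \<in> Ob C" "M \<in> Ob C" "g \<in> Hom C Z K" "p \<in> Hom C K M" "q \<in> Hom C M (shO C Z)"
    using dist_tri[OF D] by auto
  obtain Z' \<phi> where Z': "Z' \<in> Ob C" and \<phi>: "is_iso C (shO C Z') M \<phi>" using ess[OF h(3)] by blast
  obtain \<phi>i where \<phi>h: "\<phi> \<in> Hom C (shO C Z') M" and \<phi>i: "\<phi>i \<in> Hom C M (shO C Z')"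
    "cmp C \<phi>i \<phi> = idm C (shO C Z')" "cmp C \<phi> \<phi>i = idm C M"
    using \<phi> unfolding is_iso_def by blast
  have S1: "shO C Z' \<in> Ob C" using shO_ob Z' by blast
  have S2: "shO C Z \<in> Ob C" using shO_ob h(1) by blast
  define t where "t = negm C (shO C Z') (shO C Z) (cmp C q \<phi>)"
  have q\<phi>: "cmp C q \<phi> \<in> Hom C (shO C Z') (shO C Z)" using comp_hom \<phi>h h(6) by blast
  have t: "t \<in> Hom C (shO C Z') (shO C Z)" unfolding t_def using neg_hom q\<phi> by blast
  obtain v where v: "v \<in> Hom C Z' Z" "shM C v = t" using shM_surj[OF Z' h(1) t] by blast
  define r where "r = cmp C \<phi>i p"
  have r: "r \<in> Hom C K (shO C Z')" unfolding r_def using comp_hom h(5) \<phi>i(1) by blast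
  have nt: "negm C (shO C Z') (shO C Z) (shM C v) = cmp C q \<phi>"
    using v(2) neg_neg[OF q\<phi>] unfolding t_def by simp
  have tT': "is_triangle C (Z, K, shO C Z', g, r, cmp C q \<phi>)"
    unfolding is_triangle_def using h r q\<phi> S1 by auto
  have mor: "tri_morph C (Z, K, shO C Z', g, r, cmp C q \<phi>) (Z,K,M,g,p,q) (idm C Z) (idm C K) \<phi>"
  proof -
    have "cmp C \<phi> r = p"
      unfolding r_def using assoc[OF h(5) \<phi>i(1) \<phi>h] \<phi>i(3) id_l[OF h(5)] by simp
    moreover have "cmp C (shM C (idm C Z)) (cmp C q \<phi>) = cmp C q \<phi>"
      using shM_id[OF h(1)] id_l[OF q\<phi>] by simp
    ultimately show ?thesis unfolding tri_morph_def
      using id_hom h \<phi>h id_l[OF h(4)] id_r[OF h(4)] id_r[OF h(5)] by auto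
  qed
  have "tri_iso C (Z, K, shO C Z', g, r, cmp C q \<phi>) (Z,K,M,g,p,q)"
    unfolding tri_iso_def using mor id_iso h(1,2) \<phi> by auto
  then have "(Z, K, shO C Z', g, r, cmp C q \<phi>) \<in> Dist C" using iso_closed[OF D tT'] by blast
  moreover have "is_triangle C (Z',Z,K,v,g,r)"
    unfolding is_triangle_def using Z' h v r by auto
  ultimately have "(Z',Z,K,v,g,r) \<in> Dist C" using tr2 nt by simp
  then show ?thesis using Z' by blast
qed

lemma zero_third_iso:
  assumes D: "(X,Y,Z,u,v,w) \<in> Dist C" and E: "is_zero_obj C Z"
  shows "is_iso C X Y u"
proof -
  have h: "X \<in> Ob C" "Y \<in> Ob C" "Z \<in> Ob C" "u \<in> Hom C X Y" "v \<in> Hom C Y Z" "w \<in> Hom C Z (shO C X)"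
    using dist_tri[OF D] by auto
  have "cmp C v (idm C Y) = zerom C Y Z" using id_r[OF h(5)] zobj_to[OF E h(5)] by simp
  then obtain s where s: "s \<in> Hom C Y X" "idm C Y = cmp C u s"
    using exact_cov[OF D id_hom[OF h(2)]] by blast
  have iX: "idm C X \<in> Hom C X X" using id_hom h(1) by blast
  define m where "m = addm C (cmp C s u) (negm C X X (idm C X))"
  have su: "cmp C s u \<in> Hom C X X" using comp_hom h(4) s(1) by blast
  have m: "m \<in> Hom C X X" unfolding m_def using add_hom su neg_hom[OF iX] by blast
  have "cmp C u m = addm C (cmp C u (cmp C s u)) (cmp C u (negm C X X (idm C X)))"
    unfolding m_def using distr[OF su neg_hom[OF iX] h(4)] .
  also have "\<dots> = addm C u (negm C X Y u)"
    using assoc[OF h(4) s(1) h(4)] s(2) id_l[OF h(4)] comp_neg_r[OF iX h(4)] id_r[OF h(4)] by simp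
  also have "\<dots> = zerom C X Y" using neg_add[OF h(4)] .
  finally have um: "cmp C u m = zerom C X Y" .
  have R2: "(Z, shO C X, shO C Y, w, negm C (shO C X) (shO C Y) (shM C u),
      negm C (shO C Y) (shO C Z) (shM C v)) \<in> Dist C" using rot[OF rot[OF D]] .
  have sm: "shM C m \<in> Hom C (shO C X) (shO C X)" using shM_hom m by blast
  have su': "shM C u \<in> Hom C (shO C X) (shO C Y)" using shM_hom h(4) by blast
  have X1: "shO C X \<in> Ob C" and Y1: "shO C Y \<in> Ob C" using shO_ob h by auto
  have "cmp C (negm C (shO C X) (shO C Y) (shM C u)) (shM C m)
      = negm C (shO C X) (shO C Y) (cmp C (shM C u) (shM C m))" using comp_neg_l[OF sm su'] .
  also have "\<dots> = negm C (shO C X) (shO C Y) (shM C (zerom C X Y))"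
    using shM_comp[OF m h(4)] um by simp
  also have "\<dots> = zerom C (shO C X) (shO C Y)" using shM_zero[OF h(1,2)] neg_zero[OF X1 Y1] by simp
  finally obtain k where k: "k \<in> Hom C (shO C X) Z" "shM C m = cmp C w k"
    using exact_cov[OF R2 sm] by blast
  have "shM C m = zerom C (shO C X) (shO C X)"
    using k zobj_to[OF E k(1)] comp_zero_r[OF h(6) X1] by simp
  then have "shM C m = shM C (zerom C X X)" using shM_zero[OF h(1) h(1)] by simp
  then have "m = zerom C X X" using shM_inj[OF m zero_hom[OF h(1) h(1)]] by blast
  then have "cmp C s u = idm C X" using eq_of_add_neg[OF su iX] unfolding m_def by blast
  then show ?thesis unfolding is_iso_def using h(4) s by auto
qed

lemma iso_first_zero:
  assumes D: "(X,Y,Z,u,v,w) \<in> Dist C" and I: "is_iso C X Y u"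
  shows "is_zero_obj C Z"
proof -
  have h: "X \<in> Ob C" "Y \<in> Ob C" "Z \<in> Ob C" "u \<in> Hom C X Y" "v \<in> Hom C Y Z" "w \<in> Hom C Z (shO C X)"
    using dist_tri[OF D] by auto
  obtain ui where ui: "ui \<in> Hom C Y X" "cmp C ui u = idm C X" "cmp C u ui = idm C Y"
    using I unfolding is_iso_def by blast
  have X1: "shO C X \<in> Ob C" and Y1: "shO C Y \<in> Ob C" using shO_ob h by auto
  have "v = cmp C v (cmp C u ui)" using ui(3) id_r[OF h(5)] by simp
  also have "\<dots> = cmp C (cmp C v u) ui" using assoc[OF ui(1) h(4) h(5)] .
  also have "\<dots> = zerom C Y Z" using comp_dist[OF D] comp_zero_l[OF ui(1) h(3)] by simp
  finally have v0: "v = zerom C Y Z" .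
  have R2: "(Z, shO C X, shO C Y, w, negm C (shO C X) (shO C Y) (shM C u),
      negm C (shO C Y) (shO C Z) (shM C v)) \<in> Dist C" using rot[OF rot[OF D]] .
  have su: "shM C u \<in> Hom C (shO C X) (shO C Y)" using shM_hom h(4) by blast
  have sui: "shM C ui \<in> Hom C (shO C Y) (shO C X)" using shM_hom ui(1) by blast
  have uw: "cmp C (shM C u) w \<in> Hom C Z (shO C Y)" using comp_hom h(6) su by blast
  have "negm C Z (shO C Y) (cmp C (shM C u) w) = zerom C Z (shO C Y)"
    using comp_dist[OF R2] comp_neg_l[OF h(6) su] by simp
  then have uw0: "cmp C (shM C u) w = zerom C Z (shO C Y)" using neg_eq_zero[OF uw] by blast
  have "w = cmp C (shM C (cmp C ui u)) w" using ui(2) shM_id[OF h(1)] id_l[OF h(6)] by simp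
  also have "\<dots> = cmp C (shM C ui) (cmp C (shM C u) w)"
    using shM_comp[OF h(4) ui(1)] assoc[OF h(6) su sui] by simp
  also have "\<dots> = zerom C Z (shO C X)" using uw0 comp_zero_r[OF sui h(3)] by simp
  finally have w0: "w = zerom C Z (shO C X)" .
  have R1: "(Y, Z, shO C X, v, w, negm C (shO C X) (shO C Y) (shM C u)) \<in> Dist C" using rot[OF D] .
  have "cmp C w (idm C Z) = zerom C Z (shO C X)" using id_r[OF h(6)] w0 by simp
  then obtain s where s: "s \<in> Hom C Z Y" "idm C Z = cmp C v s"
    using exact_cov[OF R1 id_hom[OF h(3)]] by blast
  then have "idm C Z = zerom C Z Z" using v0 comp_zero_l[OF s(1) h(3)] by simp
  then show ?thesis using zobj_intro h(3) by blast
qed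

lemma zero_third_split:
  assumes D: "(X,Y,Z,u,v,w) \<in> Dist C" and w0: "w = zerom C Z (shO C X)"
  shows "split_epi C Y Z v"
proof -
  have h: "X \<in> Ob C" "Y \<in> Ob C" "Z \<in> Ob C" "u \<in> Hom C X Y" "v \<in> Hom C Y Z" "w \<in> Hom C Z (shO C X)"
    using dist_tri[OF D] by auto
  have R1: "(Y, Z, shO C X, v, w, negm C (shO C X) (shO C Y) (shM C u)) \<in> Dist C" using rot[OF D] .
  have "cmp C w (idm C Z) = zerom C Z (shO C X)" using id_r[OF h(6)] w0 by simp
  then obtain s where s: "s \<in> Hom C Z Y" "idm C Z = cmp C v s"
    using exact_cov[OF R1 id_hom[OF h(3)]] by blast
  then show ?thesis unfolding split_epi_def using h(5) by auto
qed

end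



locale trifun = A: tri A + B: tri B
  for A :: "('o, 'm, 'x) tricat_scheme" and B :: "('p, 'n, 'y) tricat_scheme" +
  fixes FO :: "'o \<Rightarrow> 'p" and FM :: "'m \<Rightarrow> 'n" and \<xi> :: "'o \<Rightarrow> 'n"
  assumes F: "is_triangle_functor A B FO FM \<xi>"
begin

lemma FF1: "\<forall>X\<in>Ob A. FO X \<in> Ob B \<and> FM (idm A X) = idm B (FO X)"
  using F unfolding is_triangle_functor_def by (elim conjE) assumption
lemma FF2: "\<forall>X Y f. f \<in> Hom A X Y \<longrightarrow> FM f \<in> Hom B (FO X) (FO Y)"
  using F unfolding is_triangle_functor_def by (elim conjE) assumption
lemma FF3: "\<forall>X Y Z f g. f \<in> Hom A X Y \<and> g \<in> Hom A Y Z \<longrightarrow> FM (cmp A g f) = cmp B (FM g) (FM f)"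
  using F unfolding is_triangle_functor_def by (elim conjE) assumption
lemma FF4: "\<forall>X Y f g. f \<in> Hom A X Y \<and> g \<in> Hom A X Y \<longrightarrow> FM (addm A f g) = addm B (FM f) (FM g)"
  using F unfolding is_triangle_functor_def by (elim conjE) assumption
lemma FF5: "\<forall>X\<in>Ob A. is_iso B (FO (shO A X)) (shO B (FO X)) (\<xi> X)"
  using F unfolding is_triangle_functor_def by (elim conjE) assumption
lemma FF6: "\<forall>X Y f. f \<in> Hom A X Y \<longrightarrow>
        cmp B (\<xi> Y) (FM (shM A f)) = cmp B (shM B (FM f)) (\<xi> X)"
  using F unfolding is_triangle_functor_def by (elim conjE) assumption
lemma FF7: "\<forall>X Y Z u v w. (X, Y, Z, u, v, w) \<in> Dist A \<longrightarrow>
        (FO X, FO Y, FO Z, FM u, FM v, cmp B (\<xi> X) (FM w)) \<in> Dist B"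
  using F unfolding is_triangle_functor_def by (elim conjE) assumption

lemma F_ob: "X \<in> Ob A \<Longrightarrow> FO X \<in> Ob B" using FF1 by blast
lemma F_id: "X \<in> Ob A \<Longrightarrow> FM (idm A X) = idm B (FO X)" using FF1 by blast
lemma F_hom: "f \<in> Hom A X Y \<Longrightarrow> FM f \<in> Hom B (FO X) (FO Y)" using FF2 by blast
lemma F_comp: "f \<in> Hom A X Y \<Longrightarrow> g \<in> Hom A Y Z \<Longrightarrow> FM (cmp A g f) = cmp B (FM g) (FM f)"
  using FF3 by blast
lemma F_add: "f \<in> Hom A X Y \<Longrightarrow> g \<in> Hom A X Y \<Longrightarrow> FM (addm A f g) = addm B (FM f) (FM g)"
  using FF4 by blast
lemma xi_iso: "X \<in> Ob A \<Longrightarrow> is_iso B (FO (shO A X)) (shO B (FO X)) (\<xi> X)"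
  using FF5 by blast
lemma xi_nat: "f \<in> Hom A X Y \<Longrightarrow> cmp B (\<xi> Y) (FM (shM A f)) = cmp B (shM B (FM f)) (\<xi> X)"
  using FF6 by blast
lemma F_dist: "(X, Y, Z, u, v, w) \<in> Dist A \<Longrightarrow>
        (FO X, FO Y, FO Z, FM u, FM v, cmp B (\<xi> X) (FM w)) \<in> Dist B"
  using FF7 by blast

lemma F_zero:
  assumes X: "X \<in> Ob A" and Y: "Y \<in> Ob A"
  shows "FM (zerom A X Y) = zerom B (FO X) (FO Y)"
proof -
  have z: "zerom A X Y \<in> Hom A X Y" using A.zero_hom X Y by blast
  have fz: "FM (zerom A X Y) \<in> Hom B (FO X) (FO Y)" using F_hom z by blast
  have "FM (zerom A X Y) = FM (addm A (zerom A X Y) (zerom A X Y))" using A.add_zero[OF z] by simp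
  also have "\<dots> = addm B (FM (zerom A X Y)) (FM (zerom A X Y))" using F_add[OF z z] .
  finally show ?thesis using B.add_cancel[OF fz fz] by simp
qed

lemma F_iso:
  assumes "is_iso A X Y f" shows "is_iso B (FO X) (FO Y) (FM f)"
proof -
  obtain g where f: "f \<in> Hom A X Y" and g: "g \<in> Hom A Y X" "cmp A g f = idm A X" "cmp A f g = idm A Y"
    using assms unfolding is_iso_def by blast
  have X: "X \<in> Ob A" and Y: "Y \<in> Ob A" using A.hom_ob f by auto
  have "cmp B (FM g) (FM f) = idm B (FO X)" using F_comp[OF f g(1)] g(2) F_id[OF X] by simp
  moreover have "cmp B (FM f) (FM g) = idm B (FO Y)" using F_comp[OF g(1) f] g(3) F_id[OF Y] by simp
  ultimately show ?thesis unfolding is_iso_def using F_hom f g(1) by blast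
qed

lemma F_neg:
  assumes f: "f \<in> Hom A X Y" shows "FM (negm A X Y f) = negm B (FO X) (FO Y) (FM f)"
proof -
  have X: "X \<in> Ob A" and Y: "Y \<in> Ob A" using A.hom_ob f by auto
  have "addm B (FM f) (FM (negm A X Y f)) = zerom B (FO X) (FO Y)"
    using F_add[OF f A.neg_hom[OF f]] A.neg_add[OF f] F_zero[OF X Y] by simp
  then show ?thesis using B.neg_unique[OF F_hom[OF f] F_hom[OF A.neg_hom[OF f]]] by simp
qed

lemma WSE_obj:
  assumes W: "WSE A B FO FM" shows "objective A B FO FM"
  unfolding objective_def
proof (intro allI impI)
  fix X Y f assume a: "f \<in> Hom A X Y \<and> FM f = zerom B (FO X) (FO Y)"
  then have f: "f \<in> Hom A X Y" and Ff: "FM f = zerom B (FO X) (FO Y)" by auto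
  have X: "X \<in> Ob A" and Y: "Y \<in> Ob A" using A.hom_ob f by auto
  have X1: "shO A X \<in> Ob A" and Y1: "shO A Y \<in> Ob A" using A.shO_ob X Y by auto
  obtain Z v w where D: "(X,Y,Z,f,v,w) \<in> Dist A" using A.tr1ex[OF X Y f] by blast
  have h: "Z \<in> Ob A" "v \<in> Hom A Y Z" "w \<in> Hom A Z (shO A X)" using A.dist_tri[OF D] by auto
  define nf where "nf = negm A (shO A X) (shO A Y) (shM A f)"
  have sf: "shM A f \<in> Hom A (shO A X) (shO A Y)" using A.shM_hom f by blast
  have R1: "(Y, Z, shO A X, v, w, nf) \<in> Dist A" unfolding nf_def using A.rot[OF D] .
  have FR1: "(FO Y, FO Z, FO (shO A X), FM v, FM w, cmp B (\<xi> Y) (FM nf)) \<in> Dist B"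
    using F_dist[OF R1] .
  have FX1: "FO (shO A X) \<in> Ob B" and FY1: "FO (shO A Y) \<in> Ob B" using F_ob X1 Y1 by auto
  have FX: "FO X \<in> Ob B" and FY: "FO Y \<in> Ob B" using F_ob X Y by auto
  obtain \<xi>i where \<xi>Y: "\<xi> Y \<in> Hom B (FO (shO A Y)) (shO B (FO Y))"
    and \<xi>i: "\<xi>i \<in> Hom B (shO B (FO Y)) (FO (shO A Y))" "cmp B \<xi>i (\<xi> Y) = idm B (FO (shO A Y))"
    using xi_iso[OF Y] unfolding is_iso_def by blast
  have \<xi>X: "\<xi> X \<in> Hom B (FO (shO A X)) (shO B (FO X))" using xi_iso[OF X] unfolding is_iso_def by blast
  have Fsf: "FM (shM A f) \<in> Hom B (FO (shO A X)) (FO (shO A Y))" using F_hom sf by blast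
  have "cmp B (\<xi> Y) (FM (shM A f)) = zerom B (FO (shO A X)) (shO B (FO Y))"
    using xi_nat[OF f] Ff B.shM_zero[OF FX FY] B.comp_zero_l[OF \<xi>X B.shO_ob[OF FY]] by simp
  then have "FM (shM A f) = cmp B \<xi>i (zerom B (FO (shO A X)) (shO B (FO Y)))"
    using B.assoc[OF Fsf \<xi>Y \<xi>i(1)] \<xi>i(2) B.id_l[OF Fsf] by simp
  then have Fsf0: "FM (shM A f) = zerom B (FO (shO A X)) (FO (shO A Y))"
    using B.comp_zero_r[OF \<xi>i(1) FX1] by simp
  have "FM nf = zerom B (FO (shO A X)) (FO (shO A Y))"
    unfolding nf_def using F_neg[OF sf] Fsf0 B.neg_zero[OF FX1 FY1] by simp
  then have "cmp B (\<xi> Y) (FM nf) = zerom B (FO (shO A X)) (shO B (FO Y))"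
    using B.comp_zero_r[OF \<xi>Y FX1] by simp
  then have se: "split_epi B (FO Z) (FO (shO A X)) (FM w)"
    using B.zero_third_split[OF FR1] by blast
  obtain Z' w' where Z': "Z' \<in> Ob A" and w': "w' \<in> Hom A Z' Z"
    and Fk: "is_iso B (FO Z') (FO (shO A X)) (FM (cmp A w w'))"
    using W h(3) se unfolding WSE_def by blast
  define k where "k = cmp A w w'"
  have k: "k \<in> Hom A Z' (shO A X)" unfolding k_def using A.comp_hom w' h(3) by blast
  have R2: "(Z, shO A X, shO A Y, w, nf, negm A (shO A Y) (shO A Z) (shM A v)) \<in> Dist A"
    unfolding nf_def using A.rot[OF R1[unfolded nf_def]] .
  have sfw: "cmp A (shM A f) w \<in> Hom A Z (shO A Y)" using A.comp_hom h(3) sf by blast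
  have "negm A Z (shO A Y) (cmp A (shM A f) w) = zerom A Z (shO A Y)"
    using A.comp_dist[OF R2] A.comp_neg_l[OF h(3) sf] unfolding nf_def by simp
  then have "cmp A (shM A f) w = zerom A Z (shO A Y)" using A.neg_eq_zero[OF sfw] by blast
  then have fk: "cmp A (shM A f) k = zerom A Z' (shO A Y)"
    unfolding k_def using A.assoc[OF w' h(3) sf] A.comp_zero_l[OF w' Y1] by simp
  obtain Cc a b where Dk: "(Z', shO A X, Cc, k, a, b) \<in> Dist A" using A.tr1ex[OF Z' X1 k] by blast
  have hk: "Cc \<in> Ob A" "a \<in> Hom A (shO A X) Cc" using A.dist_tri[OF Dk] by auto
  have FC: "is_zero_obj B (FO Cc)"
    using B.iso_first_zero[OF F_dist[OF Dk]] Fk unfolding k_def by blast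
  obtain c where c: "c \<in> Hom A Cc (shO A Y)" "shM A f = cmp A c a"
    using A.exact_contra[OF Dk sf fk] by blast
  obtain K \<psi> where K: "K \<in> Ob A" and \<psi>: "is_iso A (shO A K) Cc \<psi>" using A.ess[OF hk(1)] by blast
  obtain \<psi>i where \<psi>h: "\<psi> \<in> Hom A (shO A K) Cc" and \<psi>i: "\<psi>i \<in> Hom A Cc (shO A K)"
    "cmp A \<psi>i \<psi> = idm A (shO A K)" "cmp A \<psi> \<psi>i = idm A Cc"
    using \<psi> unfolding is_iso_def by blast
  have \<psi>a: "cmp A \<psi>i a \<in> Hom A (shO A X) (shO A K)" using A.comp_hom hk(2) \<psi>i(1) by blast
  have c\<psi>: "cmp A c \<psi> \<in> Hom A (shO A K) (shO A Y)" using A.comp_hom \<psi>h c(1) by blast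
  obtain a' where a': "a' \<in> Hom A X K" "shM A a' = cmp A \<psi>i a" using A.shM_surj[OF X K \<psi>a] by blast
  obtain c' where c': "c' \<in> Hom A K Y" "shM A c' = cmp A c \<psi>" using A.shM_surj[OF K Y c\<psi>] by blast
  have "shM A (cmp A c' a') = cmp A (cmp A c \<psi>) (cmp A \<psi>i a)" using A.shM_comp[OF a'(1) c'(1)] a' c' by simp
  also have "\<dots> = cmp A c (cmp A (cmp A \<psi> \<psi>i) a)"
    using A.assoc[OF \<psi>a \<psi>h c(1)] A.assoc[OF hk(2) \<psi>i(1) \<psi>h] by simp
  also have "\<dots> = shM A f" using \<psi>i(3) A.id_l[OF hk(2)] c(2) by simp
  finally have "f = cmp A c' a'" using A.shM_inj[OF f A.comp_hom[OF a'(1) c'(1)]] by simp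
  moreover have "is_zero_obj B (FO K)"
  proof -
    have "is_zero_obj B (FO (shO A K))" using B.zobj_iso2[OF FC F_iso[OF \<psi>]] .
    then have "is_zero_obj B (shO B (FO K))" using B.zobj_iso1 xi_iso[OF K] by blast
    then show ?thesis using B.shift_zobj_refl F_ob[OF K] by blast
  qed
  ultimately show "\<exists>K\<in>Ob A. is_zero_obj B (FO K) \<and> (\<exists>g\<in>Hom A X K. \<exists>h\<in>Hom A K Y. f = cmp A h g)"
    using K a'(1) c'(1) by blast
qed

lemma obj_WSE:
  assumes O: "objective A B FO FM" shows "WSE A B FO FM"
  unfolding WSE_def
proof (intro allI impI)
  fix Y Z v assume a: "v \<in> Hom A Y Z \<and> split_epi B (FO Y) (FO Z) (FM v)"
  then have v: "v \<in> Hom A Y Z" by blast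
  obtain s where s: "s \<in> Hom B (FO Z) (FO Y)" "cmp B (FM v) s = idm B (FO Z)"
    using a unfolding split_epi_def by blast
  have Y: "Y \<in> Ob A" and Z: "Z \<in> Ob A" using A.hom_ob v by auto
  obtain Cc a b where D: "(Y,Z,Cc,v,a,b) \<in> Dist A" using A.tr1ex[OF Y Z v] by blast
  have h: "Cc \<in> Ob A" "a \<in> Hom A Z Cc" using A.dist_tri[OF D] by auto
  have Fa: "FM a \<in> Hom B (FO Z) (FO Cc)" using F_hom h(2) by blast
  have Fv: "FM v \<in> Hom B (FO Y) (FO Z)" using F_hom v by blast
  have "FM a = cmp B (FM a) (cmp B (FM v) s)" using s(2) B.id_r[OF Fa] by simp
  also have "\<dots> = cmp B (FM (cmp A a v)) s" using B.assoc[OF s(1) Fv Fa] F_comp[OF v h(2)] by simp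
  also have "\<dots> = zerom B (FO Z) (FO Cc)"
    using A.comp_dist[OF D] F_zero[OF Y h(1)] B.comp_zero_l[OF s(1) F_ob[OF h(1)]] by simp
  finally have "FM a = zerom B (FO Z) (FO Cc)" .
  then obtain K where K: "K \<in> Ob A" "is_zero_obj B (FO K)" and
    gh: "\<exists>g\<in>Hom A Z K. \<exists>h\<in>Hom A K Cc. a = cmp A h g"
    using O h(2) unfolding objective_def by blast
  then obtain g hh where g: "g \<in> Hom A Z K" and hh: "hh \<in> Hom A K Cc" and ag: "a = cmp A hh g" by blast
  obtain M p q where Dg: "(Z,K,M,g,p,q) \<in> Dist A" using A.tr1ex[OF Z K(1) g] by blast
  obtain Z' v'' r where Z': "Z' \<in> Ob A" and D2: "(Z',Z,K,v'',g,r) \<in> Dist A"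
    using A.back_rot[OF Dg] by blast
  have v'': "v'' \<in> Hom A Z' Z" using A.dist_tri[OF D2] by auto
  have "cmp A a v'' = cmp A hh (cmp A g v'')" using ag A.assoc[OF v'' g hh] by simp
  also have "\<dots> = zerom A Z' Cc" using A.comp_dist[OF D2] A.comp_zero_r[OF hh Z'] by simp
  finally obtain v' where v': "v' \<in> Hom A Z' Y" "v'' = cmp A v v'"
    using A.exact_cov[OF D v''] by blast
  have "is_iso B (FO Z') (FO Z) (FM v'')" using B.zero_third_iso[OF F_dist[OF D2] K(2)] .
  then show "\<exists>Z'\<in>Ob A. \<exists>v'\<in>Hom A Z' Y. is_iso B (FO Z') (FO Z) (FM (cmp A v v'))"
    using Z' v' by auto
qed

end

theorem theorem1:
  fixes A :: "('o, 'm) tricat" and B :: "('p, 'n) tricat"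
    and FO :: "'o \<Rightarrow> 'p" and FM :: "'m \<Rightarrow> 'n" and \<xi> :: "'o \<Rightarrow> 'n"
  assumes "is_triangulated A" and "is_triangulated B"
    and "is_triangle_functor A B FO FM \<xi>"
  shows "WSE A B FO FM \<longleftrightarrow> objective A B FO FM"
proof -
  interpret trifun A B FO FM \<xi>
    using assms by (simp add: trifun_def trifun_axioms_def tri_def)
  show ?thesis using WSE_obj obj_WSE by blast
qed


end
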